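(* Let $W \subset \mathbb{R}^2$ be the Warsaw Circle. Then the zeroth Milnor-Thurston homology group $\mathcal{H}_0(W)$ is a real vector space of uncountable dimension.
   Context: The Warsaw Circle $W \subset \mathbb{R}^2$ is the union of: the portion of the topologist's sine curve $\{(x,y) : y = \sin(1/x),\ x>0\}$ between the line $x=0$ and its rightmost minimum; the segment $\{(0,y) : -1 \leq y \leq 1\}$; and an arc (disjoint from the rest except at endpoints) joining $(0,-1)$ to that rightmost minimum. Milnor-Thurston (measure) homology: for a topological space $X$ and integer $k \geq 0$, let $C^0(\Delta^k, X)$ be the space of continuous maps from the standard $k$-simplex $\Delta^k$ to $X$, with the compact-open topology. $\mathcal{C}_k(X)$ is the real vector space of finite signed Borel measures on $C^0(\Delta^k,X)$ admitting a compact carrier (a set whose complement contains only Borel sets of measure zero). The boundary $\partial : \mathcal{C}_k(X) \to \mathcal{C}_{k-1}(X)$ is $\partial = \sum_{i=0}^k (-1)^i \partial_i$, where $\partial_i \mu$ is the image measure $A \mapsto \mu(\{\sigma : \sigma\circ\delta_i \in A\})$, with $\delta_i : \Delta^{k-1} \to \Delta^k$ the standard inclusion of the $i$-th face. The homology $\mathcal{H}_*(X)$ of this chain complex is the Milnor-Thurston homology of $X$. *)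

theory Defs
  imports "HOL-Analysis.Analysis" "HOL-Homology.Homology"
begin

text \<open>Portion of the topologist's sine curve between x = 0 and its rightmost minimum
  (2/(3 pi), -1), and the limit segment on the y-axis.\<close>

definition warsaw_sine :: "(real \<times> real) set" where
  "warsaw_sine = {(x, y). 0 < x \<and> x \<le> 2 / (3 * pi) \<and> y = sin (1 / x)}"

definition warsaw_segment :: "(real \<times> real) set" where
  "warsaw_segment = {(0, y) | y. -1 \<le> y \<and> y \<le> 1}"

text \<open>Continuous maps are represented extensionally (fixed to undefined outside the
  domain), as in HOL-Homology's singular simplices.\<close>

definition cmaps :: "'a topology \<Rightarrow> 'b topology \<Rightarrow> ('a \<Rightarrow> 'b) set" where
  "cmaps X Y = {f. continuous_map X Y f \<and> f \<in> extensional (topspace X)}"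

definition compact_open_topology :: "'a topology \<Rightarrow> 'b topology \<Rightarrow> ('a \<Rightarrow> 'b) topology" where
  "compact_open_topology X Y =
     topology (arbitrary union_of
       (finite intersection_of
          (\<lambda>V. \<exists>K U. compactin X K \<and> openin Y U \<and> V = {f \<in> cmaps X Y. f ` K \<subseteq> U})
        relative_to cmaps X Y))"

definition simplex_space :: "nat \<Rightarrow> 'a topology \<Rightarrow> ((nat \<Rightarrow> real) \<Rightarrow> 'a) topology" where
  "simplex_space k X =
     compact_open_topology (subtopology (powertop_real UNIV) (standard_simplex k)) X"

definition borel_sets_of :: "'a topology \<Rightarrow> 'a set set" where
  "borel_sets_of T = sigma_sets (topspace T) {U. openin T U}"

text \<open>A finite signed Borel measure, represented as a real-valued set function which is
  countably additive on Borel sets and (by convention) zero on non-Borel sets.\<close>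

definition finite_signed_borel_measure :: "'a topology \<Rightarrow> ('a set \<Rightarrow> real) \<Rightarrow> bool" where
  "finite_signed_borel_measure T \<mu> \<longleftrightarrow>
     (\<forall>A. A \<notin> borel_sets_of T \<longrightarrow> \<mu> A = 0) \<and>
     (\<forall>A :: nat \<Rightarrow> 'a set. range A \<subseteq> borel_sets_of T \<longrightarrow> disjoint_family A \<longrightarrow>
          (\<lambda>n. \<mu> (A n)) sums \<mu> (\<Union>n. A n))"

definition has_compact_carrier :: "'a topology \<Rightarrow> ('a set \<Rightarrow> real) \<Rightarrow> bool" where
  "has_compact_carrier T \<mu> \<longleftrightarrow>
     (\<exists>K. compactin T K \<and> (\<forall>A \<in> borel_sets_of T. A \<inter> K = {} \<longrightarrow> \<mu> A = 0))"

definition MT_chains :: "'a topology \<Rightarrow> nat \<Rightarrow> (((nat \<Rightarrow> real) \<Rightarrow> 'a) set \<Rightarrow> real) set" where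
  "MT_chains X k = {\<mu>. finite_signed_borel_measure (simplex_space k X) \<mu>
                       \<and> has_compact_carrier (simplex_space k X) \<mu>}"

definition MT_face :: "'a topology \<Rightarrow> nat \<Rightarrow> nat
     \<Rightarrow> (((nat \<Rightarrow> real) \<Rightarrow> 'a) set \<Rightarrow> real) \<Rightarrow> (((nat \<Rightarrow> real) \<Rightarrow> 'a) set \<Rightarrow> real)" where
  "MT_face X k i \<mu> =
     (\<lambda>A. if A \<in> borel_sets_of (simplex_space (k - 1) X)
          then \<mu> {\<sigma> \<in> topspace (simplex_space k X). singular_face k i \<sigma> \<in> A}
          else 0)"

definition MT_boundary :: "'a topology \<Rightarrow> nat
     \<Rightarrow> (((nat \<Rightarrow> real) \<Rightarrow> 'a) set \<Rightarrow> real) \<Rightarrow> (((nat \<Rightarrow> real) \<Rightarrow> 'a) set \<Rightarrow> real)" where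
  "MT_boundary X k \<mu> = (\<lambda>A. \<Sum>i\<le>k. (-1) ^ i * MT_face X k i \<mu> A)"

text \<open>H_0 = C_0 / image of the boundary C_1 -> C_0.  "H_0 has uncountable dimension"
  means: there is an uncountable family of 0-chains whose classes are linearly
  independent in the quotient.\<close>

definition MT_H0_uncountable_dim :: "'a topology \<Rightarrow> bool" where
  "MT_H0_uncountable_dim X \<longleftrightarrow>
     (\<exists>B \<subseteq> MT_chains X 0. uncountable B \<and>
        (\<forall>F c. finite F \<longrightarrow> F \<subseteq> B \<longrightarrow>
           (\<exists>\<nu> \<in> MT_chains X 1. MT_boundary X 1 \<nu> = (\<lambda>A. \<Sum>\<mu>\<in>F. c \<mu> * \<mu> A)) \<longrightarrow>
           (\<forall>\<mu>\<in>F. c \<mu> = 0)))"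

end

theory Submission
  imports Defs "HOL-Real_Asymp.Real_Asymp"
begin

lemma co_topspace [simp]: "topspace (compact_open_topology X Y) = cmaps X Y"
  unfolding compact_open_topology_def by (rule topspace_subbase)

lemma co_openin_sub:
  assumes "compactin X K" "openin Y U"
  shows "openin (compact_open_topology X Y) {f \<in> cmaps X Y. f ` K \<subseteq> U}"
proof -
  let ?P = "(\<lambda>V. \<exists>K U. compactin X K \<and> openin Y U \<and> V = {f \<in> cmaps X Y. f ` K \<subseteq> U})"
  have "?P {f \<in> cmaps X Y. f ` K \<subseteq> U}" using assms by blast
  then have "(finite intersection_of ?P) {f \<in> cmaps X Y. f ` K \<subseteq> U}"
    by (rule finite_intersection_of_inc)
  then have "(finite intersection_of ?P relative_to cmaps X Y) {f \<in> cmaps X Y. f ` K \<subseteq> U}"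
    unfolding relative_to_def by (intro exI[of _ "{f \<in> cmaps X Y. f ` K \<subseteq> U}"]) auto
  then show ?thesis unfolding compact_open_topology_def openin_subbase
    by (rule arbitrary_union_of_inc)
qed

lemma co_openin_cases:
  assumes "openin (compact_open_topology X Y) V" "f \<in> V"
  shows "\<exists>T. finite T \<and> (\<forall>S\<in>T. \<exists>K U. compactin X K \<and> openin Y U \<and> S = {f \<in> cmaps X Y. f ` K \<subseteq> U})
     \<and> f \<in> cmaps X Y \<inter> \<Inter>T \<and> cmaps X Y \<inter> \<Inter>T \<subseteq> V"
proof -
  let ?P = "(\<lambda>V. \<exists>K U. compactin X K \<and> openin Y U \<and> V = {f \<in> cmaps X Y. f ` K \<subseteq> U})"
  from assms(1) have "(arbitrary union_of (finite intersection_of ?P relative_to cmaps X Y)) V"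
    unfolding compact_open_topology_def openin_subbase .
  then obtain \<U> where U: "\<And>S. S \<in> \<U> \<Longrightarrow> (finite intersection_of ?P relative_to cmaps X Y) S" "\<Union>\<U> = V"
    unfolding union_of_def by blast
  then obtain S where S: "S \<in> \<U>" "f \<in> S" using assms(2) by blast
  then obtain S' where S': "(finite intersection_of ?P) S'" "cmaps X Y \<inter> S' = S"
    using U(1) unfolding relative_to_def by blast
  then obtain T where T: "finite T" "T \<subseteq> Collect ?P" "\<Inter>T = S'"
    unfolding intersection_of_def by blast
  show ?thesis using T S S' U(2) by (intro exI[of _ T]) auto
qed



abbreviation "Sim k \<equiv> subtopology (powertop_real UNIV) (standard_simplex k)"

lemma topspace_Sim [simp]: "topspace (Sim k) = standard_simplex k" by simp

lemma cmaps_Sim: "cmaps (Sim k) X = {f. singular_simplex k X f}"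
  unfolding cmaps_def singular_simplex_def by simp

lemma topspace_simplex_space [simp]: "topspace (simplex_space k X) = {f. singular_simplex k X f}"
  unfolding simplex_space_def co_topspace cmaps_Sim ..

definition e0 :: "nat \<Rightarrow> real" where "e0 = (\<lambda>j. if j = 0 then 1 else 0)"
definition phi :: "real \<Rightarrow> nat \<Rightarrow> real" where
  "phi t = (\<lambda>i. if i = 0 then 1 - t else if i = 1 then t else 0)"

lemma e0_simplex [simp]: "e0 \<in> standard_simplex 0"
  by (simp add: standard_simplex_0 e0_def)

lemma phi_simplex: "t \<in> {0..1} \<Longrightarrow> phi t \<in> standard_simplex 1"
  by (auto simp: standard_simplex_def phi_def)

lemma face0_e0: "singular_face 1 0 f e0 = f (phi 1)"
  by (auto simp: singular_face_def simplical_face_def e0_def phi_def intro!: arg_cong[where f=f])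

lemma face1_e0: "singular_face 1 1 f e0 = f (phi 0)"
  by (auto simp: singular_face_def simplical_face_def e0_def phi_def intro!: arg_cong[where f=f])

lemma phi_cont: "continuous_map (top_of_set {0..1}) (Sim 1) phi"
proof -
  have "continuous_map (top_of_set {0..1}) (powertop_real UNIV) phi"
    unfolding continuous_map_componentwise_UNIV phi_def
  proof
    fix k show "continuous_map (top_of_set {0..1}) euclideanreal (\<lambda>x. if k = 0 then 1 - x else if k = 1 then x else 0)"
      by (cases "k = 0"; cases "k = 1") (auto intro!: continuous_intros)
  qed
  then show ?thesis using phi_simplex
    by (auto simp: continuous_map_in_subtopology)
qed

lemma ev_cont:
  assumes "v \<in> standard_simplex k"
  shows "continuous_map (simplex_space k X) X (\<lambda>f. f v)"
  unfolding continuous_map_def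
proof (intro conjI allI impI)
  show "(\<lambda>f. f v) \<in> topspace (simplex_space k X) \<rightarrow> topspace X"
    using assms by (auto simp: singular_simplex_def continuous_map_def)
  fix U assume U: "openin X U"
  have "{x \<in> topspace (simplex_space k X). x v \<in> U} = {f \<in> cmaps (Sim k) X. f ` {v} \<subseteq> U}"
    by (auto simp: cmaps_Sim)
  moreover have "openin (simplex_space k X) {f \<in> cmaps (Sim k) X. f ` {v} \<subseteq> U}"
    unfolding simplex_space_def using assms U by (intro co_openin_sub) auto
  ultimately show "openin (simplex_space k X) {x \<in> topspace (simplex_space k X). x v \<in> U}" by simp
qed

lemma borel_sigma_algebra: "sigma_algebra (topspace T) (borel_sets_of T)"
  unfolding borel_sets_of_def by (rule sigma_algebra_sigma_sets) (auto dest: openin_subset)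

lemma borel_open: "openin T U \<Longrightarrow> U \<in> borel_sets_of T"
  unfolding borel_sets_of_def by auto

lemma borel_subset: "A \<in> borel_sets_of T \<Longrightarrow> A \<subseteq> topspace T"
proof -
  interpret sigma_algebra "topspace T" "borel_sets_of T" by (rule borel_sigma_algebra)
  show "A \<in> borel_sets_of T \<Longrightarrow> A \<subseteq> topspace T" using sets_into_space by blast
qed

lemma borel_preimage:
  assumes f: "continuous_map S T f" and A: "A \<in> borel_sets_of T"
  shows "{x \<in> topspace S. f x \<in> A} \<in> borel_sets_of S"
  using A unfolding borel_sets_of_def
proof (induction rule: sigma_sets.induct)
  case (Basic a)
  then show ?case using f by (auto simp: continuous_map_def)
next
  case Empty
  then show ?case by (simp add: sigma_sets.Empty)
next
  case (Compl a)
  have "{x \<in> topspace S. f x \<in> topspace T - a} = topspace S - {x \<in> topspace S. f x \<in> a}"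
    using f by (auto simp: continuous_map_def)
  then show ?case using Compl by (simp add: sigma_sets.Compl)
next
  case (Union a)
  have "{x \<in> topspace S. f x \<in> (\<Union>i. a i)} = (\<Union>i. {x \<in> topspace S. f x \<in> a i})" by auto
  then show ?case using Union by (simp add: sigma_sets.Union)
qed

context fixes T :: "'a topology" begin
interpretation BS: sigma_algebra "topspace T" "borel_sets_of T" by (rule borel_sigma_algebra)
lemma borel_Diff: "A \<in> borel_sets_of T \<Longrightarrow> B \<in> borel_sets_of T \<Longrightarrow> A - B \<in> borel_sets_of T"
  by (rule BS.Diff)
lemma borel_Int: "A \<in> borel_sets_of T \<Longrightarrow> B \<in> borel_sets_of T \<Longrightarrow> A \<inter> B \<in> borel_sets_of T"
  by (rule BS.Int)
lemma borel_Un: "A \<in> borel_sets_of T \<Longrightarrow> B \<in> borel_sets_of T \<Longrightarrow> A \<union> B \<in> borel_sets_of T"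
  by (rule BS.Un)
lemma borel_empty: "{} \<in> borel_sets_of T"
  by (rule BS.empty_sets)
lemma borel_UN: "range (A :: nat \<Rightarrow> _) \<subseteq> borel_sets_of T \<Longrightarrow> (\<Union>i. A i) \<in> borel_sets_of T"
  using BS.countable_UN[of A UNIV] by simp
lemma borel_finite_UN: "finite I \<Longrightarrow> (\<And>i. i \<in> I \<Longrightarrow> A i \<in> borel_sets_of T) \<Longrightarrow> (\<Union>i\<in>I. A i) \<in> borel_sets_of T"
  by (rule BS.finite_UN) auto
end



context
  fixes T :: "'a topology" and \<nu> :: "'a set \<Rightarrow> real"
  assumes m: "finite_signed_borel_measure T \<nu>"
begin

lemma fsm_sums: "range A \<subseteq> borel_sets_of T \<Longrightarrow> disjoint_family A \<Longrightarrow> (\<lambda>n. \<nu> (A n)) sums \<nu> (\<Union>n. A n)"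
  using m unfolding finite_signed_borel_measure_def by blast

lemma fsm_empty: "\<nu> {} = 0"
proof -
  have "(\<lambda>n::nat. \<nu> {}) sums \<nu> (\<Union>n::nat. {})"
    by (rule fsm_sums) (auto simp: borel_empty disjoint_family_on_def)
  then have "summable (\<lambda>n::nat. \<nu> {})" by (simp add: sums_summable)
  then have "(\<lambda>n::nat. \<nu> {}) \<longlonglongrightarrow> 0" by (rule summable_LIMSEQ_zero)
  then show ?thesis by (simp add: LIMSEQ_const_iff)
qed

lemma fsm_finite_UN:
  fixes I :: "nat set"
  assumes I: "finite I" and B: "\<And>i. i \<in> I \<Longrightarrow> A i \<in> borel_sets_of T" and d: "disjoint_family_on A I"
  shows "\<nu> (\<Union>i\<in>I. A i) = (\<Sum>i\<in>I. \<nu> (A i))"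
proof -
  define A' where "A' n = (if n \<in> I then A n else {})" for n :: nat
  have "(\<lambda>n. \<nu> (A' n)) sums \<nu> (\<Union>n. A' n)"
    by (rule fsm_sums) (use B d in \<open>auto simp: A'_def borel_empty disjoint_family_on_def\<close>)
  moreover have "(\<Union>n. A' n) = (\<Union>i\<in>I. A i)" by (auto simp: A'_def split: if_splits)
  moreover have "(\<lambda>n. \<nu> (A' n)) sums (\<Sum>i\<in>I. \<nu> (A' i))"
    by (rule sums_finite) (use I in \<open>auto simp: A'_def fsm_empty\<close>)
  moreover have "(\<Sum>i\<in>I. \<nu> (A' i)) = (\<Sum>i\<in>I. \<nu> (A i))"
    by (rule sum.cong) (auto simp: A'_def)
  ultimately show ?thesis using sums_unique2 by metis
qed

lemma fsm_Un:
  assumes "A \<in> borel_sets_of T" "B \<in> borel_sets_of T" "A \<inter> B = {}"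
  shows "\<nu> (A \<union> B) = \<nu> A + \<nu> B"
proof -
  have "\<nu> (\<Union>i\<in>{0::nat,1}. (if i = 0 then A else B)) = (\<Sum>i\<in>{0::nat,1}. \<nu> (if i = 0 then A else B))"
    by (rule fsm_finite_UN) (use assms in \<open>auto simp: disjoint_family_on_def\<close>)
  then show ?thesis by (simp add: Un_commute)
qed

lemma fsm_split:
  assumes "A \<in> borel_sets_of T" "B \<in> borel_sets_of T"
  shows "\<nu> A = \<nu> (A \<inter> B) + \<nu> (A - B)"
proof -
  have "A = (A \<inter> B) \<union> (A - B)" by auto
  moreover have "\<nu> ((A \<inter> B) \<union> (A - B)) = \<nu> (A \<inter> B) + \<nu> (A - B)"
    by (rule fsm_Un) (use assms borel_Int borel_Diff in auto)
  ultimately show ?thesis by simp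
qed

lemma fsm_abs_summable:
  assumes B: "range A \<subseteq> borel_sets_of T" and d: "disjoint_family A"
  shows "summable (\<lambda>n. \<bar>\<nu> (A n)\<bar>)"
proof -
  define P where "P n = (if \<nu> (A n) \<ge> 0 then A n else {})" for n
  define N where "N n = (if \<nu> (A n) < 0 then A n else {})" for n
  have "(\<lambda>n. \<nu> (P n)) sums \<nu> (\<Union>n. P n)"
    by (rule fsm_sums) (use B d in \<open>auto simp: P_def borel_empty disjoint_family_on_def\<close>)
  then have sP: "summable (\<lambda>n. \<nu> (P n))" by (rule sums_summable)
  have "(\<lambda>n. \<nu> (N n)) sums \<nu> (\<Union>n. N n)"
    by (rule fsm_sums) (use B d in \<open>auto simp: N_def borel_empty disjoint_family_on_def\<close>)
  then have sN: "summable (\<lambda>n. \<nu> (N n))" by (rule sums_summable)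
  have "summable (\<lambda>n. \<nu> (P n) - \<nu> (N n))" using sP sN by (rule summable_diff)
  moreover have "\<nu> (P n) - \<nu> (N n) = \<bar>\<nu> (A n)\<bar>" for n
    by (auto simp: P_def N_def fsm_empty)
  ultimately show ?thesis by simp
qed

end


definition cc :: "nat \<Rightarrow> real" where "cc n = 2 / ((4 * real n + 3) * pi)"
definition mm :: "nat \<Rightarrow> real" where "mm n = 2 / ((4 * real n + 1) * pi)"

lemma sin_plus_2npi: "sin (x + real n * (2 * pi)) = sin x"
proof (induction n)
  case (Suc n)
  have "x + real (Suc n) * (2 * pi) = (x + real n * (2 * pi)) + 2 * pi" by (simp add: algebra_simps)
  then show ?case using Suc by (metis sin_periodic)
qed simp

lemma sin_cc [simp]: "sin (1 / cc n) = -1"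
proof -
  have "1 / cc n = 3/2*pi + real n * (2 * pi)" by (simp add: cc_def field_simps)
  then show ?thesis using sin_plus_2npi[of "3/2*pi" n] sin_3over2_pi by simp
qed

lemma sin_mm [simp]: "sin (1 / mm n) = 1"
proof -
  have "1 / mm n = pi/2 + real n * (2 * pi)" by (simp add: mm_def field_simps)
  then show ?thesis using sin_plus_2npi[of "pi/2" n] by simp
qed

lemma two_div_less: "0 < A \<Longrightarrow> 0 < B \<Longrightarrow> (2 / A < 2 / B) = (B < (A::real))"
  by (simp add: divide_simps)

lemma cc_pos [simp]: "0 < cc n" by (simp add: cc_def)
lemma mm_pos [simp]: "0 < mm n" by (simp add: mm_def)
lemma cc_0: "cc 0 = 2 / (3 * pi)" by (simp add: cc_def)

lemma cc_less_iff [simp]: "cc m < cc n \<longleftrightarrow> n < m"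
proof -
  have "cc m < cc n \<longleftrightarrow> (4 * real n + 3) * pi < (4 * real m + 3) * pi"
    unfolding cc_def by (rule two_div_less) (auto intro: add_pos_nonneg)
  also have "\<dots> \<longleftrightarrow> n < m" by simp
  finally show ?thesis .
qed

lemma cc_le_iff [simp]: "cc m \<le> cc n \<longleftrightarrow> n \<le> m"
  by (meson cc_less_iff not_le)

lemma mm_less_cc_iff: "mm k < cc n \<longleftrightarrow> n < k"
proof -
  have "mm k < cc n \<longleftrightarrow> 4 * real n + 3 < 4 * real k + 1"
    unfolding mm_def cc_def by (subst two_div_less) (auto intro: add_pos_nonneg)
  also have "\<dots> \<longleftrightarrow> n < k" by linarith
  finally show ?thesis .
qed

lemma cc_less_mm_iff: "cc n < mm k \<longleftrightarrow> k \<le> n"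
proof -
  have "cc n < mm k \<longleftrightarrow> 4 * real k + 1 < 4 * real n + 3"
    unfolding mm_def cc_def by (subst two_div_less) (auto intro: add_pos_nonneg)
  also have "\<dots> \<longleftrightarrow> k \<le> n" by linarith
  finally show ?thesis .
qed

lemma cc_le_cc0: "cc n \<le> 2 / (3 * pi)" using cc_le_iff[of n 0] by (simp add: cc_0)

lemma mm_tendsto: "(\<lambda>k. mm k) \<longlonglongrightarrow> 0"
proof -
  have "(\<lambda>k. 2 / pi / (4 * real k + 1)) \<longlonglongrightarrow> 0"
    by real_asymp
  then show ?thesis by (simp add: mm_def field_simps)
qed

definition Dset :: "nat \<Rightarrow> (real \<times> real) set" where
  "Dset n = {(x, sin (1 / x)) | x. 0 < x \<and> x < cc n}"

lemma Dset_iff: "p \<in> Dset n \<longleftrightarrow> 0 < fst p \<and> fst p < cc n \<and> snd p = sin (1 / fst p)"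
  by (cases p) (auto simp: Dset_def)

lemma Dset_mono: "m \<le> n \<Longrightarrow> Dset n \<subseteq> Dset m"
  by (auto simp: Dset_iff) (meson cc_le_iff less_le_trans)

lemma Dset_sine: "Dset n \<subseteq> warsaw_sine"
  using cc_le_cc0[of n] by (auto simp: Dset_iff warsaw_sine_def)

lemma mm_Dset_iff: "(mm k, 1) \<in> Dset n \<longleftrightarrow> n < k"
  by (simp add: Dset_iff mm_less_cc_iff)

lemma Dset_Int_empty: "(\<Inter>n. Dset n) = {}"
proof safe
  fix a b assume "(a, b) \<in> (\<Inter>n. Dset n)"
  then have a: "0 < a" "\<And>n. a < cc n" by (auto simp: Dset_iff)
  have "(\<lambda>k. cc k) \<longlonglongrightarrow> 0"
  proof -
    have "(\<lambda>k. 2 / pi / (4 * real k + 3)) \<longlonglongrightarrow> 0" by real_asymp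
    then show ?thesis by (simp add: cc_def field_simps)
  qed
  then have "eventually (\<lambda>k. cc k < a) sequentially" using a(1) order_tendstoD(2) by blast
  then obtain k where "cc k < a" by (meson eventually_sequentially order_refl)
  then show "(a, b) \<in> {}" using a(2)[of k] by simp
qed



locale warsaw =
  fixes g :: "real \<Rightarrow> real \<times> real" and W :: "(real \<times> real) set"
  assumes arc: "arc g"
    and gs: "pathstart g = (0, -1)"
    and gf: "pathfinish g = (2 / (3 * pi), -1)"
    and gint: "path_image g \<inter> (warsaw_sine \<union> warsaw_segment) = {(0, -1), (2 / (3 * pi), -1)}"
    and Wdef: "W = warsaw_sine \<union> warsaw_segment \<union> path_image g"
begin

lemma Dset_W: "Dset n \<subseteq> W" using Dset_sine Wdef by blast

lemma mm_W: "(mm (Suc k), 1) \<in> W"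
proof -
  have "(mm (Suc k), 1) \<in> Dset 0" by (simp add: mm_Dset_iff)
  then show ?thesis using Dset_W by blast
qed

lemma top_W: "(0, 1) \<in> W" unfolding Wdef warsaw_segment_def by auto

lemma Dset_open: "openin (top_of_set W) (Dset n)"
  unfolding openin_euclidean_subtopology_iff
proof (intro conjI ballI)
  show "Dset n \<subseteq> W" by (rule Dset_W)
  fix p assume p: "p \<in> Dset n"
  then have p1: "0 < fst p" "fst p < cc n" "snd p = sin (1 / fst p)" by (auto simp: Dset_iff)
  have pn: "p \<notin> path_image g"
  proof
    assume "p \<in> path_image g"
    then have "p \<in> {(0, -1), (2 / (3 * pi), -1)}" using gint p Dset_sine by blast
    then show False using p1 cc_le_cc0[of n] by (cases p) auto
  qed
  have cl: "closed (path_image g)"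
    using arc by (simp add: arc_imp_path compact_imp_closed compact_path_image)
  obtain d where d: "d > 0" "\<And>x. x \<in> path_image g \<Longrightarrow> d \<le> dist p x"
    using separate_point_closed[OF cl pn] by blast
  define r where "r = min d (min (fst p) (cc n - fst p))"
  have r: "r > 0" using d p1 by (simp add: r_def)
  show "\<exists>e>0. \<forall>x'\<in>W. dist x' p < e \<longrightarrow> x' \<in> Dset n"
  proof (intro exI[of _ r] conjI r ballI impI)
    fix q assume q: "q \<in> W" "dist q p < r"
    have fq: "\<bar>fst q - fst p\<bar> < r" using dist_fst_le[of q p] q(2) by (simp add: dist_real_def)
    consider "q \<in> warsaw_sine" | "q \<in> warsaw_segment" | "q \<in> path_image g" using q(1) Wdef by blast
    then show "q \<in> Dset n"
    proof cases
      case 1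
      then have "0 < fst q" "snd q = sin (1 / fst q)" by (auto simp: warsaw_sine_def)
      moreover have "fst q < cc n" using fq unfolding r_def by linarith
      ultimately show ?thesis by (simp add: Dset_iff)
    next
      case 2
      then have "fst q = 0" by (auto simp: warsaw_segment_def)
      then show ?thesis using fq unfolding r_def by linarith
    next
      case 3
      then have "d \<le> dist q p" using d(2)[of q] by (simp add: dist_commute)
      then show ?thesis using q(2) unfolding r_def by linarith
    qed
  qed
qed

end


context warsaw begin

lemma geom:
  fixes h :: "real \<Rightarrow> real \<times> real" and N :: nat
  assumes hc: "continuous_on {0..1} h" and hW: "h ` {0..1} \<subseteq> W" and N: "N > 0"
    and md: "\<And>s t. 0 \<le> s \<Longrightarrow> s \<le> t \<Longrightarrow> t \<le> 1 \<Longrightarrow> t - s \<le> 1 / real N \<Longrightarrow> \<bar>snd (h s) - snd (h t)\<bar> < 2"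
    and h0: "h 0 \<notin> Dset n" and h1: "h 1 \<in> Dset (n + N + 2)"
  shows False
proof -
  obtain Op where Op: "open Op" "Dset n = W \<inter> Op" using Dset_open[of n] openin_open by blast
  define S0 where "S0 = {0..1} \<inter> h -` (- Op)"
  have clS0: "closed S0" unfolding S0_def
    by (rule continuous_closed_preimage) (use hc Op(1) in auto)
  have "h 0 \<in> W" using hW by auto
  then have "0 \<in> S0" using h0 Op(2) by (auto simp: S0_def)
  have bS0: "bdd_above S0" by (auto simp: S0_def bdd_above_def)
  define s where "s = Sup S0"
  have sS0: "s \<in> S0" unfolding s_def using closed_contains_Sup[OF _ bS0 clS0] \<open>0 \<in> S0\<close> by blast
  have s01: "0 \<le> s" "s \<le> 1" using sS0 by (auto simp: S0_def)
  have h1n: "h 1 \<in> Dset n" using h1 Dset_mono[of n "n + N + 2"] by auto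
  have key: "h t \<in> Dset n" if "s < t" "t \<le> 1" for t
  proof -
    have "t \<notin> S0" using that cSup_upper[OF _ bS0, of t] by (auto simp: s_def)
    then have "h t \<in> Op" using that s01 by (auto simp: S0_def)
    moreover have "h t \<in> W" using hW that s01 by auto
    ultimately show ?thesis using Op(2) by auto
  qed
  have "s \<noteq> 1" using sS0 h1n Op(2) by (auto simp: S0_def)
  then have s1: "s < 1" using s01 by simp
  have hsnD: "h s \<notin> Dset n" using sS0 Op(2) by (auto simp: S0_def)
  define F where "F = at_right s"
  have Fnt: "F \<noteq> bot" by (simp add: F_def)
  have hlim: "(h \<longlongrightarrow> h s) F"
  proof -
    have "continuous_on {s..1} h" using s01 by (intro continuous_on_subset[OF hc]) auto
    then have "(h \<longlongrightarrow> h s) (at s within {s..1})" using s1 by (simp add: continuous_on_def)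
    then show ?thesis using at_within_Icc_at_right[OF s1] by (simp add: F_def)
  qed
  have evD: "eventually (\<lambda>t. s < t \<and> t < 1 \<and> h t \<in> Dset n) F"
    using eventually_at_right_real[OF s1] unfolding F_def
    by (rule eventually_mono) (auto intro: key)
  have flim: "((\<lambda>t. fst (h t)) \<longlongrightarrow> fst (h s)) F" using hlim by (rule tendsto_fst)
  have slim: "((\<lambda>t. snd (h t)) \<longlongrightarrow> snd (h s)) F" using hlim by (rule tendsto_snd)
  have ev0: "eventually (\<lambda>t. 0 \<le> fst (h t)) F" using evD by (rule eventually_mono) (simp add: Dset_iff)
  have ev1: "eventually (\<lambda>t. cc n \<ge> fst (h t)) F" using evD by (rule eventually_mono) (simp add: Dset_iff)
  have fs0: "0 \<le> fst (h s)"
    by (rule tendsto_lowerbound[OF flim ev0]) (simp add: Fnt)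
  have fs1: "fst (h s) \<le> cc n"
    by (rule tendsto_upperbound[OF flim ev1]) (simp add: Fnt)
  have graph_s: "snd (h s) = sin (1 / fst (h s))" if "0 < fst (h s)"
  proof -
    have "((\<lambda>t. sin (1 / fst (h t))) \<longlongrightarrow> sin (1 / fst (h s))) F"
      using that by (intro tendsto_sin tendsto_divide flim tendsto_const) auto
    moreover have "eventually (\<lambda>t. sin (1 / fst (h t)) = snd (h t)) F"
      using evD by (rule eventually_mono) (auto simp: Dset_iff)
    ultimately have "((\<lambda>t. snd (h t)) \<longlongrightarrow> sin (1 / fst (h s))) F"
      by (rule Lim_transform_eventually)
    then show ?thesis using tendsto_unique[OF Fnt slim] by simp
  qed
  have fsne0: "fst (h s) \<noteq> 0"
  proof
    assume fz: "fst (h s) = 0"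
    have "\<forall>x\<in>{0..1}. \<forall>e>0. \<exists>d>0. \<forall>x'\<in>{0..1}. dist x' x < d \<longrightarrow> dist (h x') (h x) < e"
      using hc unfolding continuous_on_iff .
    then have "\<exists>d>0. \<forall>x'\<in>{0..1}. dist x' s < d \<longrightarrow> dist (h x') (h s) < 1/2"
      using s01 by (meson atLeastAtMost_iff half_gt_zero zero_less_one)
    then obtain d where d: "d > 0" "\<And>t. t \<in> {0..1} \<Longrightarrow> dist t s < d \<Longrightarrow> dist (h t) (h s) < 1/2"
      by blast
    define t1 where "t1 = min (s + d/2) 1"
    have t1: "s < t1" "t1 \<le> 1" "dist t1 s < d" using d s1 by (auto simp: t1_def dist_real_def)
    have ht1: "h t1 \<in> Dset n" using key t1 by auto
    then have x1: "0 < fst (h t1)" by (simp add: Dset_iff)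
    have "eventually (\<lambda>k. mm k < fst (h t1)) sequentially" using order_tendstoD(2)[OF mm_tendsto x1] .
    then obtain k where k: "mm k < fst (h t1)" unfolding eventually_sequentially by blast
    have ck: "cc k < mm k" by (simp add: cc_less_mm_iff)
    have "eventually (\<lambda>t. fst (h t) < cc k) F" using order_tendstoD(2)[OF flim] fz by simp
    moreover have "eventually (\<lambda>t. s < t \<and> t < t1) F"
      using eventually_at_right_real[OF t1(1)] unfolding F_def by (rule eventually_mono) auto
    ultimately have "eventually (\<lambda>t. fst (h t) < cc k \<and> s < t \<and> t < t1) F"
      by (rule eventually_conj)
    then have "\<exists>t. fst (h t) < cc k \<and> s < t \<and> t < t1" using eventually_happens'[OF Fnt] by blast
    then obtain t0 where t0: "fst (h t0) < cc k" "s < t0" "t0 < t1" by blast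
    have cf: "continuous_on {t0..t1} (\<lambda>t. fst (h t))"
      by (intro continuous_on_fst continuous_on_subset[OF hc]) (use t0 t1 s01 in auto)
    obtain ta where ta: "t0 \<le> ta" "ta \<le> t1" "fst (h ta) = cc k"
      using IVT'[of "\<lambda>t. fst (h t)" t0 "cc k" t1, OF _ _ _ cf] t0 ck k by auto
    obtain tb where tb: "t0 \<le> tb" "tb \<le> t1" "fst (h tb) = mm k"
      using IVT'[of "\<lambda>t. fst (h t)" t0 "mm k" t1, OF _ _ _ cf] t0 ck k by auto
    have "h ta \<in> Dset n" "h tb \<in> Dset n" using key ta tb t0 t1 by auto
    then have ya: "snd (h ta) = -1" and yb: "snd (h tb) = 1" using ta tb by (auto simp: Dset_iff)
    have "dist (h ta) (h s) < 1/2" using d(2)[of ta] ta t0 t1 s01 by (auto simp: dist_real_def)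
    then have "\<bar>snd (h ta) - snd (h s)\<bar> < 1/2" using dist_snd_le[of "h ta" "h s"] by (simp add: dist_real_def)
    moreover have "dist (h tb) (h s) < 1/2" using d(2)[of tb] tb t0 t1 s01 by (auto simp: dist_real_def)
    then have "\<bar>snd (h tb) - snd (h s)\<bar> < 1/2" using dist_snd_le[of "h tb" "h s"] by (simp add: dist_real_def)
    ultimately show False using ya yb by linarith
  qed
  have fscn: "fst (h s) = cc n"
  proof (rule ccontr)
    assume "fst (h s) \<noteq> cc n"
    then have "0 < fst (h s)" "fst (h s) < cc n" using fs0 fs1 fsne0 by auto
    then have "h s \<in> Dset n" using graph_s by (simp add: Dset_iff)
    then show False using hsnD by simp
  qed
  have gr: "snd (h t) = sin (1 / fst (h t))" if "s \<le> t" "t \<le> 1" for t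
  proof (cases "t = s")
    case True
    then show ?thesis using graph_s fscn by simp
  next
    case False
    then show ?thesis using key[of t] that by (simp add: Dset_iff)
  qed
  have h1c: "fst (h 1) < cc (n + N + 2)" using h1 by (simp add: Dset_iff)
  have ind: "\<exists>t. s + real j / real N \<le> t \<and> t \<le> 1 \<and> fst (h t) = cc (n + j)" if "j \<le> N + 1" for j
    using that
  proof (induction j)
    case 0
    then show ?case using s1 fscn by (intro exI[of _ s]) auto
  next
    case (Suc j)
    then obtain t where t: "s + real j / real N \<le> t" "t \<le> 1" "fst (h t) = cc (n + j)" by auto
    have "0 \<le> real j / real N" by simp
    then have st: "s \<le> t" using t(1) by linarith
    have a1: "cc (n + N + 2) < mm (n + j + 1)" using Suc.prems by (simp add: cc_less_mm_iff)
    have a2: "mm (n + j + 1) < cc (n + j)" by (simp add: mm_less_cc_iff)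
    have a3: "cc (n + j + 1) < mm (n + j + 1)" by (simp add: cc_less_mm_iff)
    have cf: "continuous_on {t..1} (\<lambda>t. fst (h t))"
      by (intro continuous_on_fst continuous_on_subset[OF hc]) (use st s01 in auto)
    obtain v where v: "t \<le> v" "v \<le> 1" "fst (h v) = mm (n + j + 1)"
      using IVT2'[of "\<lambda>t. fst (h t)" 1 "mm (n + j + 1)" t, OF _ _ _ cf] t h1c a1 a2 by auto
    have cf2: "continuous_on {v..1} (\<lambda>t. fst (h t))"
      by (rule continuous_on_subset[OF cf]) (use v in auto)
    have a4: "cc (n + N + 2) \<le> cc (n + j + 1)" using Suc.prems by simp
    obtain u where u: "v \<le> u" "u \<le> 1" "fst (h u) = cc (n + j + 1)"
      using IVT2'[of "\<lambda>t. fst (h t)" 1 "cc (n + j + 1)" v, OF _ _ _ cf2] v a3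
        less_le_trans[OF h1c a4] by auto
    have yt: "snd (h t) = -1" using gr[of t] st t by simp
    have yv: "snd (h v) = 1" using gr[of v] st v by simp
    have "\<not> (v - t \<le> 1 / real N)"
    proof
      assume "v - t \<le> 1 / real N"
      then have "\<bar>snd (h t) - snd (h v)\<bar> < 2" using md[of t v] st s01 v by simp
      then show False using yt yv by simp
    qed
    then have "s + real (Suc j) / real N \<le> u" using t(1) u(1)
      by (simp add: add_divide_distrib)
    then show ?case using u by (intro exI[of _ u]) (auto simp: add.assoc)
  qed
  obtain t where t: "s + real (N + 1) / real N \<le> t" "t \<le> 1" using ind[of "N + 1"] by auto
  have "real (N + 1) / real N > 1" using N by (simp add: field_simps)
  then show False using t s01 by linarith
qed

end


lemma floor_index:
  fixes M :: nat and s :: real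
  assumes M: "M > 0" and s: "0 \<le> s" "s \<le> 1"
  shows "\<exists>j<M. real j / real M \<le> s \<and> s \<le> real (Suc j) / real M"
proof (cases "s = 1")
  case True
  then show ?thesis using M by (intro exI[of _ "M - 1"]) (auto simp: of_nat_diff)
next
  case False
  define j where "j = nat \<lfloor>s * real M\<rfloor>"
  have fl: "real_of_int \<lfloor>s * real M\<rfloor> \<le> s * real M" "s * real M < real_of_int \<lfloor>s * real M\<rfloor> + 1"
    by linarith+
  have f0: "0 \<le> \<lfloor>s * real M\<rfloor>" using s by simp
  have rj: "real j = real_of_int \<lfloor>s * real M\<rfloor>" using f0 by (simp add: j_def)
  have "s * real M < real M" using False s M by simp
  then have "real j < real M" using rj fl by linarith
  then have "j < M" by simp
  moreover have "real j / real M \<le> s" using rj fl M by (simp add: divide_simps)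
  moreover have "s * real M \<le> real (Suc j)" using rj fl by linarith
  then have "s \<le> real (Suc j) / real M" using M by (simp add: divide_simps)
  ultimately show ?thesis by blast
qed

lemma mod_core:
  fixes M :: nat and h :: "real \<Rightarrow> real \<times> real" and c :: "nat \<Rightarrow> real \<times> real"
  assumes M: "M > 0"
    and a: "\<And>j t. j < M \<Longrightarrow> real j / real M \<le> t \<Longrightarrow> t \<le> real (Suc j) / real M \<Longrightarrow> dist (h t) (c j) < 1/2"
    and b: "\<And>j. Suc j < M \<Longrightarrow> dist (c j) (c (Suc j)) < 1/2"
    and st: "0 \<le> s" "s \<le> t" "t \<le> 1" "t - s \<le> 1 / real M"
  shows "\<bar>snd (h s) - snd (h t)\<bar> < 2"
proof -
  obtain j where j: "j < M" "real j / real M \<le> s" "s \<le> real (Suc j) / real M"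
    using floor_index[OF M st(1)] st by auto
  have ds: "dist (h s) (c j) < 1/2" using a j by blast
  have "dist (h s) (h t) < 3/2"
  proof (cases "t \<le> real (Suc j) / real M")
    case True
    then have "dist (h t) (c j) < 1/2" using a j st by auto
    then show ?thesis using ds dist_triangle2[of "h s" "h t" "c j"] by linarith
  next
    case False
    have "real (Suc j) / real M < 1" using False st by linarith
    then have sj: "Suc j < M" using M by (simp add: divide_simps)
    have "t \<le> real (Suc (Suc j)) / real M"
    proof -
      have "real (Suc (Suc j)) / real M = real (Suc j) / real M + 1 / real M" by (simp add: add_divide_distrib)
      then show ?thesis using j st by linarith
    qed
    then have "dist (h t) (c (Suc j)) < 1/2" using a[OF sj] False by auto
    moreover have "dist (h s) (c (Suc j)) < 1" using ds b[OF sj] dist_triangle[of "h s" "c (Suc j)" "c j"] by linarith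
    ultimately show ?thesis using dist_triangle2[of "h s" "h t" "c (Suc j)"] by linarith
  qed
  then show ?thesis using dist_snd_le[of "h s" "h t"] by (simp add: dist_real_def)
qed


lemma simplex1_path:
  assumes "\<sigma> \<in> topspace (simplex_space 1 (top_of_set W))"
  shows "continuous_on {0..1} (\<sigma> \<circ> phi) \<and> (\<sigma> \<circ> phi) ` {0..1} \<subseteq> W"
proof -
  have "continuous_map (Sim 1) (top_of_set W) \<sigma>" using assms by (simp add: singular_simplex_def)
  then have "continuous_map (top_of_set {0..1}) (top_of_set W) (\<sigma> \<circ> phi)"
    using phi_cont continuous_map_compose by blast
  then show ?thesis by (auto simp: Pi_iff)
qed

lemma compact_mod:
  fixes W :: "(real \<times> real) set"
  assumes K: "compactin (simplex_space 1 (top_of_set W)) K"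
  shows "\<exists>N>0. \<forall>\<sigma>\<in>K. \<forall>s t. 0 \<le> s \<longrightarrow> s \<le> t \<longrightarrow> t \<le> 1 \<longrightarrow> t - s \<le> 1 / real N \<longrightarrow>
            \<bar>snd (\<sigma> (phi s)) - snd (\<sigma> (phi t))\<bar> < 2"
proof -
  let ?X = "simplex_space 1 (top_of_set W)"
  have KX: "K \<subseteq> topspace ?X" using K by (simp add: compactin_def)
  have "\<exists>M V. M > 0 \<and> openin ?X V \<and> \<sigma> \<in> V \<and> (\<forall>\<tau>\<in>V. \<forall>s t. 0 \<le> s \<longrightarrow> s \<le> t \<longrightarrow> t \<le> 1 \<longrightarrow> t - s \<le> 1 / real M \<longrightarrow>
            \<bar>snd (\<tau> (phi s)) - snd (\<tau> (phi t))\<bar> < 2)" if \<sigma>: "\<sigma> \<in> K" for \<sigma>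
  proof -
    have hs: "continuous_on {0..1} (\<sigma> \<circ> phi)" "(\<sigma> \<circ> phi) ` {0..1} \<subseteq> W"
      using simplex1_path \<sigma> KX by blast+
    have "uniformly_continuous_on {0..1} (\<sigma> \<circ> phi)"
      using compact_uniformly_continuous hs(1) by blast
    then obtain d where d: "d > 0" "\<And>x x'. x \<in> {0..1} \<Longrightarrow> x' \<in> {0..1} \<Longrightarrow> dist x' x < d \<Longrightarrow>
        dist ((\<sigma> \<circ> phi) x') ((\<sigma> \<circ> phi) x) < 1/2"
      unfolding uniformly_continuous_on_def by (meson half_gt_zero zero_less_one)
    obtain M :: nat where M: "M > 0" "inverse (real M) < d" using ex_inverse_of_nat_less[OF d(1)] by blast
    define I where "I j = {real j / real M .. real (Suc j) / real M}" for j
    define c where "c j = \<sigma> (phi (real j / real M))" for j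
    define V where "V = (\<Inter>j\<in>{..<M}. {f \<in> cmaps (Sim 1) (top_of_set W). f ` (phi ` I j) \<subseteq> W \<inter> ball (c j) (1/2)})"
    have I01: "I j \<subseteq> {0..1}" if "j < M" for j
      using that M by (auto simp: I_def divide_simps)
    have Vopen: "openin ?X V" unfolding V_def
    proof (rule openin_INT2)
      show "finite {..<M}" "{..<M} \<noteq> {}" using M by auto
      fix j assume j: "j \<in> {..<M}"
      have "compactin (top_of_set {0..1}) (I j)"
        using I01[of j] j by (simp add: compactin_subtopology I_def)
      then have "compactin (Sim 1) (phi ` I j)" using phi_cont by (rule image_compactin)
      then show "openin ?X {f \<in> cmaps (Sim 1) (top_of_set W). f ` (phi ` I j) \<subseteq> W \<inter> ball (c j) (1/2)}"
        unfolding simplex_space_def by (intro co_openin_sub) auto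
    qed
    have cl: "dist ((\<sigma> \<circ> phi) t) ((\<sigma> \<circ> phi) (real j / real M)) < 1/2" if "j < M" "t \<in> I j" for j t
    proof -
      have "real j / real M \<in> I j" by (simp add: I_def divide_right_mono)
      then have "dist t (real j / real M) < d"
        using that M(2) by (auto simp: I_def dist_real_def divide_simps)
      then show ?thesis using d(2)[of "real j / real M" t] I01[of j] that \<open>real j / real M \<in> I j\<close> by auto
    qed
    have sV: "\<sigma> \<in> V"
    proof -
      have "\<sigma> \<in> cmaps (Sim 1) (top_of_set W)" using subsetD[OF KX \<sigma>] by (simp add: cmaps_Sim)
      moreover have "\<sigma> ` (phi ` I j) \<subseteq> W \<inter> ball (c j) (1/2)" if "j < M" for j
      proof
        fix y assume "y \<in> \<sigma> ` (phi ` I j)"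
        then obtain t where t: "t \<in> I j" "y = \<sigma> (phi t)" by auto
        have "y \<in> W" using hs(2) t I01[OF that] by auto
        moreover have "dist (c j) y < 1/2" using cl[OF that t(1)] t by (simp add: c_def dist_commute)
        ultimately show "y \<in> W \<inter> ball (c j) (1/2)" by simp
      qed
      ultimately show ?thesis by (auto simp: V_def)
    qed
    show ?thesis
    proof (intro exI conjI ballI allI impI)
      show "M > 0" "openin ?X V" "\<sigma> \<in> V" by fact+
      fix \<tau> s t assume \<tau>: "\<tau> \<in> V" and st: "0 \<le> s" "s \<le> t" "t \<le> 1" "t - s \<le> 1 / real M"
      show "\<bar>snd (\<tau> (phi s)) - snd (\<tau> (phi t))\<bar> < 2"
      proof (rule mod_core[where h = "\<lambda>x. \<tau> (phi x)" and c = c, OF M(1) _ _ st])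
        fix j t assume "j < M" "real j / real M \<le> t" "t \<le> real (Suc j) / real M"
        then have "t \<in> I j" "j \<in> {..<M}" by (auto simp: I_def)
        then have "\<tau> ` phi ` I j \<subseteq> ball (c j) (1/2)" using \<tau> by (auto simp: V_def)
        then have "\<tau> (phi t) \<in> ball (c j) (1/2)" using \<open>t \<in> I j\<close> by blast
        then show "dist (\<tau> (phi t)) (c j) < 1/2" by (simp add: dist_commute)
      next
        fix j assume j: "Suc j < M"
        have "real (Suc j) / real M \<in> I j" by (simp add: I_def divide_right_mono)
        then show "dist (c j) (c (Suc j)) < 1/2" using cl[of j "real (Suc j) / real M"] j
          by (simp add: c_def dist_commute)
      qed
    qed
  qed
  then obtain M V where MV: "\<And>\<sigma>. \<sigma> \<in> K \<Longrightarrow> M \<sigma> > 0 \<and> openin ?X (V \<sigma>) \<and> \<sigma> \<in> V \<sigma> \<and>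
     (\<forall>\<tau>\<in>V \<sigma>. \<forall>s t. 0 \<le> s \<longrightarrow> s \<le> t \<longrightarrow> t \<le> 1 \<longrightarrow> t - s \<le> 1 / real (M \<sigma>) \<longrightarrow>
            \<bar>snd (\<tau> (phi s)) - snd (\<tau> (phi t))\<bar> < 2)"
    by metis
  have cpt: "\<And>U. (\<forall>A\<in>U. openin ?X A) \<and> K \<subseteq> \<Union>U \<Longrightarrow> (\<exists>F. finite F \<and> F \<subseteq> U \<and> K \<subseteq> \<Union>F)"
  proof -
    fix U assume U: "(\<forall>A\<in>U. openin ?X A) \<and> K \<subseteq> \<Union>U"
    have "\<forall>\<U>. (\<forall>A\<in>\<U>. openin ?X A) \<and> K \<subseteq> \<Union>\<U> \<longrightarrow> (\<exists>F. finite F \<and> F \<subseteq> \<U> \<and> K \<subseteq> \<Union>F)"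
      using K unfolding compactin_def by (elim conjE)
    then show "\<exists>F. finite F \<and> F \<subseteq> U \<and> K \<subseteq> \<Union>F" using U by blast
  qed
  have "(\<forall>A\<in>V ` K. openin ?X A) \<and> K \<subseteq> \<Union>(V ` K)" using MV by blast
  then have "\<exists>F. finite F \<and> F \<subseteq> V ` K \<and> K \<subseteq> \<Union>F" by (rule cpt)
  then obtain F where F: "finite F" "F \<subseteq> V ` K" "K \<subseteq> \<Union>F" by blast
  then obtain F0 where F0: "F0 \<subseteq> K" "finite F0" "F = V ` F0" using finite_subset_image by metis
  define N where "N = (\<Sum>\<sigma>\<in>F0. M \<sigma>) + 1"
  have NM: "M \<sigma> \<le> N" if "\<sigma> \<in> F0" for \<sigma>
  proof -
    have "M \<sigma> \<le> (\<Sum>\<sigma>\<in>F0. M \<sigma>)" using that F0(2) by (simp add: member_le_sum)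
    then show ?thesis by (simp add: N_def)
  qed
  show ?thesis
  proof (intro exI conjI ballI allI impI)
    show "N > 0" by (simp add: N_def)
    fix \<tau> s t assume \<tau>: "\<tau> \<in> K" and st: "0 \<le> s" "s \<le> t" "t \<le> 1" "t - s \<le> 1 / real N"
    obtain \<sigma> where \<sigma>: "\<sigma> \<in> F0" "\<tau> \<in> V \<sigma>" using \<tau> F F0 by auto
    have "M \<sigma> > 0" using MV \<sigma> F0 by blast
    then have "1 / real N \<le> 1 / real (M \<sigma>)" using NM[OF \<sigma>(1)] by (simp add: frac_le)
    then show "\<bar>snd (\<tau> (phi s)) - snd (\<tau> (phi t))\<bar> < 2"
      using MV[of \<sigma>] \<sigma> F0 st by auto
  qed
qed



lemma level_disj:
  assumes "x \<in> Dset p - Dset (Suc p)" "x \<in> Dset q - Dset (Suc q)"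
  shows "p = q"
proof (rule ccontr)
  assume "p \<noteq> q"
  then consider "p < q" | "q < p" by linarith
  then show False
  proof cases
    case 1 then show ?thesis using assms Dset_mono[of "Suc p" q] by auto
  next
    case 2 then show ?thesis using assms Dset_mono[of "Suc q" p] by auto
  qed
qed

context warsaw begin

abbreviation "X0 \<equiv> simplex_space 0 (top_of_set W)"
abbreviation "X1 \<equiv> simplex_space 1 (top_of_set W)"

lemma Dset_borel: "Dset n \<in> borel_sets_of (top_of_set W)"
  by (rule borel_open[OF Dset_open])

lemma evset_borel:
  assumes "v \<in> standard_simplex k" "A \<in> borel_sets_of (top_of_set W)"
  shows "{\<sigma> \<in> topspace (simplex_space k (top_of_set W)). \<sigma> v \<in> A} \<in> borel_sets_of (simplex_space k (top_of_set W))"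
  by (rule borel_preimage[OF ev_cont[OF assms(1)] assms(2)])

lemma phi01: "phi 0 \<in> standard_simplex 1" "phi 1 \<in> standard_simplex 1"
  using phi_simplex[of 0] phi_simplex[of 1] by auto

lemma geomK:
  assumes N: "N > 0"
    and md: "\<And>s t. 0 \<le> s \<Longrightarrow> s \<le> t \<Longrightarrow> t \<le> 1 \<Longrightarrow> t - s \<le> 1 / real N \<Longrightarrow>
            \<bar>snd (\<sigma> (phi s)) - snd (\<sigma> (phi t))\<bar> < 2"
    and \<sigma>: "\<sigma> \<in> topspace X1"
    and ab: "(a = 0 \<and> b = 1) \<or> (a = 1 \<and> b = (0::real))"
    and hb: "\<sigma> (phi b) \<in> Dset (m + N + 2)"
  shows "\<sigma> (phi a) \<in> Dset m"
proof (rule ccontr)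
  assume ha: "\<sigma> (phi a) \<notin> Dset m"
  have p: "continuous_on {0..1} (\<sigma> \<circ> phi)" "(\<sigma> \<circ> phi) ` {0..1} \<subseteq> W"
    using simplex1_path[OF \<sigma>] by auto
  from ab show False
  proof
    assume "a = 0 \<and> b = 1"
    then show False
      using geom[of "\<lambda>t. \<sigma> (phi t)" N m] p N md ha hb by (auto simp: o_def)
  next
    assume ab': "a = 1 \<and> b = 0"
    have c: "continuous_on {0..1} (\<lambda>t. \<sigma> (phi (1 - t)))"
    proof -
      have "continuous_on {0..1} (\<lambda>t. 1 - t::real)" by (intro continuous_intros)
      moreover have "(\<lambda>t. 1 - t::real) ` {0..1} \<subseteq> {0..1}" by auto
      ultimately have "continuous_on {0..1} ((\<sigma> \<circ> phi) \<circ> (\<lambda>t. 1 - t))"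
        using continuous_on_compose continuous_on_subset p(1) by blast
      then show ?thesis by (simp add: o_def)
    qed
    have i: "(\<lambda>t. \<sigma> (phi (1 - t))) ` {0..1} \<subseteq> W" using p(2) by force
    have md': "\<bar>snd (\<sigma> (phi (1 - s))) - snd (\<sigma> (phi (1 - t)))\<bar> < 2"
      if "0 \<le> s" "s \<le> t" "t \<le> 1" "t - s \<le> 1 / real N" for s t
      using md[of "1 - t" "1 - s"] that by (simp add: abs_minus_commute)
    show False
      using geom[of "\<lambda>t. \<sigma> (phi (1 - t))" N m, OF c i N md'] ha hb ab' by auto
  qed
qed


lemma cross_summable:
  assumes \<nu>: "\<nu> \<in> MT_chains (top_of_set W) 1" and ab: "(a = 0 \<and> b = 1) \<or> (a = 1 \<and> b = (0::real))"
  shows "summable (\<lambda>n. \<bar>\<nu> ({\<sigma>\<in>topspace X1. \<sigma> (phi b) \<in> Dset n} - {\<sigma>\<in>topspace X1. \<sigma> (phi a) \<in> Dset n})\<bar>)"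
proof -
  have m: "finite_signed_borel_measure X1 \<nu>" using \<nu> by (simp add: MT_chains_def)
  obtain K where K: "compactin X1 K" and null: "\<And>A. A \<in> borel_sets_of X1 \<Longrightarrow> A \<inter> K = {} \<Longrightarrow> \<nu> A = 0"
    using \<nu> by (auto simp: MT_chains_def has_compact_carrier_def)
  have KX: "K \<subseteq> topspace X1" using K by (simp add: compactin_def)
  obtain N where N: "N > 0" and md: "\<And>\<sigma> s t. \<sigma> \<in> K \<Longrightarrow> 0 \<le> s \<Longrightarrow> s \<le> t \<Longrightarrow> t \<le> 1 \<Longrightarrow> t - s \<le> 1 / real N \<Longrightarrow>
            \<bar>snd (\<sigma> (phi s)) - snd (\<sigma> (phi t))\<bar> < 2"
    using compact_mod[OF K] by blast
  have va: "phi a \<in> standard_simplex 1" and vb: "phi b \<in> standard_simplex 1" using ab phi01 by auto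
  define L where "L = N + 2"
  define Ev where "Ev v A = {\<sigma>\<in>topspace X1. \<sigma> v \<in> A}" for v A
  have Evb: "Ev v A \<in> borel_sets_of X1" if "v \<in> standard_simplex 1" "A \<in> borel_sets_of (top_of_set W)" for v A
    unfolding Ev_def by (rule evset_borel[OF that])
  define R where "R j n = (if j \<le> n then Ev (phi a) (Dset (n - j) - Dset (Suc (n - j))) \<inter> Ev (phi b) (Dset n) else {})" for j n
  have Rb: "R j n \<in> borel_sets_of X1" for j n
  proof (cases "j \<le> n")
    case True
    have "Ev (phi a) (Dset (n - j) - Dset (Suc (n - j))) \<inter> Ev (phi b) (Dset n) \<in> borel_sets_of X1"
      by (rule borel_Int[OF Evb[OF va borel_Diff[OF Dset_borel Dset_borel]] Evb[OF vb Dset_borel]])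
    then show ?thesis using True by (simp only: R_def if_True)
  next
    case False
    then show ?thesis by (simp add: R_def borel_empty)
  qed
  have Rdisj: "disjoint_family (\<lambda>n. R j n)" for j
    unfolding disjoint_family_on_def
  proof (intro ballI impI)
    fix n n' :: nat assume "n \<noteq> n'"
    show "R j n \<inter> R j n' = {}"
    proof (rule ccontr)
      assume "R j n \<inter> R j n' \<noteq> {}"
      then obtain \<sigma> where "\<sigma> \<in> R j n" "\<sigma> \<in> R j n'" by blast
      then have "j \<le> n" "j \<le> n'" "\<sigma> (phi a) \<in> Dset (n - j) - Dset (Suc (n - j))" "\<sigma> (phi a) \<in> Dset (n' - j) - Dset (Suc (n' - j))"
        by (auto simp: R_def Ev_def split: if_splits)
      then have "n - j = n' - j" using level_disj by blast
      then show False using \<open>j \<le> n\<close> \<open>j \<le> n'\<close> \<open>n \<noteq> n'\<close> by simp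
    qed
  qed
  have sR: "summable (\<lambda>n. \<bar>\<nu> (R j n)\<bar>)" for j
    by (rule fsm_abs_summable[OF m _ Rdisj]) (use Rb in auto)
  define gg where "gg n = (\<Sum>j\<in>{1..L}. \<bar>\<nu> (R j n)\<bar>)" for n
  have sg: "summable gg" unfolding gg_def by (rule summable_sum) (rule sR)
  define P where "P n = Ev (phi b) (Dset n) - Ev (phi a) (Dset n)" for n
  have Pb: "P n \<in> borel_sets_of X1" for n
    unfolding P_def by (rule borel_Diff[OF Evb[OF vb Dset_borel] Evb[OF va Dset_borel]])
  have bound: "\<bar>\<nu> (P n)\<bar> \<le> gg n" if nL: "n \<ge> L" for n
  proof -
    define U where "U = (\<Union>j\<in>{1..L}. R j n)"
    have Ub: "U \<in> borel_sets_of X1" unfolding U_def by (rule borel_finite_UN, simp, rule Rb)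
    have dj: "disjoint_family_on (\<lambda>j. R j n) {1..L}"
      unfolding disjoint_family_on_def
    proof (intro ballI impI)
      fix j j' assume jj: "j \<in> {1..L}" "j' \<in> {1..L}" "j \<noteq> j'"
      show "R j n \<inter> R j' n = {}"
      proof (rule ccontr)
        assume "R j n \<inter> R j' n \<noteq> {}"
        then obtain \<sigma> where "\<sigma> \<in> R j n" "\<sigma> \<in> R j' n" by blast
        then have "j \<le> n" "j' \<le> n" "\<sigma> (phi a) \<in> Dset (n - j) - Dset (Suc (n - j))" "\<sigma> (phi a) \<in> Dset (n - j') - Dset (Suc (n - j'))"
          by (auto simp: R_def Ev_def split: if_splits)
        then have "n - j = n - j'" using level_disj by blast
        then show False using \<open>j \<le> n\<close> \<open>j' \<le> n\<close> jj by simp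
      qed
    qed
    have nuU: "\<nu> U = (\<Sum>j\<in>{1..L}. \<nu> (R j n))"
      unfolding U_def by (rule fsm_finite_UN[OF m], simp, rule Rb, rule dj)
    have UP: "U \<subseteq> P n"
    proof
      fix \<sigma> assume "\<sigma> \<in> U"
      then obtain j where j: "j \<in> {1..L}" "\<sigma> \<in> R j n" unfolding U_def by blast
      then have jn: "j \<le> n" and s1: "\<sigma> \<in> topspace X1" "\<sigma> (phi a) \<notin> Dset (Suc (n - j))" "\<sigma> (phi b) \<in> Dset n"
        by (auto simp: R_def Ev_def split: if_splits)
      have "Dset n \<subseteq> Dset (Suc (n - j))" using j jn by (intro Dset_mono) auto
      then show "\<sigma> \<in> P n" using s1 by (auto simp: P_def Ev_def)
    qed
    have PK: "(P n - U) \<inter> K = {}"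
    proof (rule ccontr)
      assume "(P n - U) \<inter> K \<noteq> {}"
      then obtain \<sigma> where \<sigma>: "\<sigma> \<in> P n" "\<sigma> \<notin> U" "\<sigma> \<in> K" by blast
      then have \<sigma>X: "\<sigma> \<in> topspace X1" and hb: "\<sigma> (phi b) \<in> Dset n" and ha: "\<sigma> (phi a) \<notin> Dset n"
        by (auto simp: P_def Ev_def)
      have "(n - L) + N + 2 = n" using nL by (simp add: L_def)
      then have "\<sigma> (phi b) \<in> Dset ((n - L) + N + 2)" using hb by simp
      then have haL: "\<sigma> (phi a) \<in> Dset (n - L)"
        using geomK[OF N _ \<sigma>X ab] md[OF \<sigma>(3)] by blast
      define S where "S = {i. i \<le> L \<and> \<sigma> (phi a) \<in> Dset (n - i)}"
      have "L \<in> S" using haL by (simp add: S_def)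
      define j where "j = (LEAST i. i \<in> S)"
      have jS: "j \<in> S" unfolding j_def by (rule LeastI[where P = "\<lambda>i. i \<in> S", OF \<open>L \<in> S\<close>])
      have j0: "j \<noteq> 0" proof assume "j = 0" then show False using jS ha by (simp add: S_def) qed
      have "j - 1 \<notin> S"
      proof
        assume "j - 1 \<in> S"
        then have "j \<le> j - 1" unfolding j_def by (rule Least_le)
        then show False using j0 by simp
      qed
      then have ni: "\<sigma> (phi a) \<notin> Dset (n - (j - 1))" using jS by (auto simp: S_def)
      have jn: "j \<le> n" using jS nL by (auto simp: S_def)
      have nn: "n - (j - 1) = Suc (n - j)" using jn j0 by simp
      have ni2: "\<sigma> (phi a) \<notin> Dset (Suc (n - j))" using ni unfolding nn .
      have ij: "\<sigma> (phi a) \<in> Dset (n - j)" using jS by (simp add: S_def)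
      have "\<sigma> \<in> R j n" unfolding R_def Ev_def using jn ni2 ij \<sigma>X hb by simp
      moreover have "j \<in> {1..L}" using jS j0 by (auto simp: S_def)
      ultimately show False using \<sigma>(2) unfolding U_def by blast
    qed
    have "\<nu> (P n) = \<nu> (P n \<inter> U) + \<nu> (P n - U)" by (rule fsm_split[OF m Pb Ub])
    also have "\<nu> (P n - U) = 0" by (rule null[OF borel_Diff[OF Pb Ub] PK])
    also have "P n \<inter> U = U" using UP by blast
    finally have "\<nu> (P n) = (\<Sum>j\<in>{1..L}. \<nu> (R j n))" using nuU by simp
    then show ?thesis unfolding gg_def by (simp add: sum_abs)
  qed
  have "summable (\<lambda>n. \<bar>\<nu> (P n)\<bar>)"
    by (rule summable_comparison_test'[OF sg, of L]) (use bound in auto)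
  then show ?thesis by (simp add: P_def Ev_def)
qed


definition Dt :: "nat \<Rightarrow> ((nat \<Rightarrow> real) \<Rightarrow> real \<times> real) set" where
  "Dt n = {\<tau> \<in> topspace X0. \<tau> e0 \<in> Dset n}"

lemma Dt_borel: "Dt n \<in> borel_sets_of X0"
  unfolding Dt_def by (rule evset_borel[OF e0_simplex Dset_borel])

lemma face_set:
  assumes "i \<le> 1"
  shows "{\<sigma> \<in> topspace X1. singular_face 1 i \<sigma> \<in> Dt n} = {\<sigma> \<in> topspace X1. \<sigma> (phi (1 - real i)) \<in> Dset n}"
proof -
  have A: "singular_face 1 i \<sigma> \<in> topspace X0" if "\<sigma> \<in> topspace X1" for \<sigma>
    using singular_simplex_singular_face[of 1 "top_of_set W" \<sigma> i] that assms by simp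
  have B: "singular_face 1 i \<sigma> e0 = \<sigma> (phi (1 - real i))" for \<sigma>
    using assms face0_e0 face1_e0 by (cases i) auto
  show ?thesis
  proof (intro subset_antisym subsetI)
    fix \<sigma> assume "\<sigma> \<in> {\<sigma> \<in> topspace X1. singular_face 1 i \<sigma> \<in> Dt n}"
    then have "\<sigma> \<in> topspace X1" "singular_face 1 i \<sigma> e0 \<in> Dset n" unfolding Dt_def by blast+
    then show "\<sigma> \<in> {\<sigma> \<in> topspace X1. \<sigma> (phi (1 - real i)) \<in> Dset n}" unfolding B by blast
  next
    fix \<sigma> assume "\<sigma> \<in> {\<sigma> \<in> topspace X1. \<sigma> (phi (1 - real i)) \<in> Dset n}"
    then have "\<sigma> \<in> topspace X1" "singular_face 1 i \<sigma> e0 \<in> Dset n" unfolding B by blast+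
    then show "\<sigma> \<in> {\<sigma> \<in> topspace X1. singular_face 1 i \<sigma> \<in> Dt n}" unfolding Dt_def using A by blast
  qed
qed

lemma boundary_Dt:
  "MT_boundary (top_of_set W) 1 \<nu> (Dt n) =
     \<nu> {\<sigma> \<in> topspace X1. \<sigma> (phi 1) \<in> Dset n} - \<nu> {\<sigma> \<in> topspace X1. \<sigma> (phi 0) \<in> Dset n}"
proof -
  have "MT_face (top_of_set W) 1 i \<nu> (Dt n) = \<nu> {\<sigma> \<in> topspace X1. \<sigma> (phi (1 - real i)) \<in> Dset n}" if "i \<le> 1" for i
    using Dt_borel face_set[OF that] by (simp add: MT_face_def)
  then show ?thesis by (simp add: MT_boundary_def)
qed

lemma boundary_summable:
  assumes \<nu>: "\<nu> \<in> MT_chains (top_of_set W) 1"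
  shows "summable (\<lambda>n. \<bar>MT_boundary (top_of_set W) 1 \<nu> (Dt n)\<bar>)"
proof -
  have m: "finite_signed_borel_measure X1 \<nu>" using \<nu> by (simp add: MT_chains_def)
  define E where "E v n = {\<sigma> \<in> topspace X1. \<sigma> (phi v) \<in> Dset n}" for v n
  have Eb: "E v n \<in> borel_sets_of X1" if "v = 0 \<or> v = 1" for v n
    unfolding E_def by (rule evset_borel) (use phi01 that Dset_borel in auto)
  have s1: "summable (\<lambda>n. \<bar>\<nu> (E 1 n - E 0 n)\<bar>)" using cross_summable[OF \<nu>, of 0 1] by (simp add: E_def)
  have s2: "summable (\<lambda>n. \<bar>\<nu> (E 0 n - E 1 n)\<bar>)" using cross_summable[OF \<nu>, of 1 0] by (simp add: E_def)
  have eq: "MT_boundary (top_of_set W) 1 \<nu> (Dt n) = \<nu> (E 1 n - E 0 n) - \<nu> (E 0 n - E 1 n)" for n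
  proof -
    have "\<nu> (E 1 n) = \<nu> (E 1 n \<inter> E 0 n) + \<nu> (E 1 n - E 0 n)" by (rule fsm_split[OF m Eb Eb]) auto
    moreover have "\<nu> (E 0 n) = \<nu> (E 0 n \<inter> E 1 n) + \<nu> (E 0 n - E 1 n)" by (rule fsm_split[OF m Eb Eb]) auto
    moreover have "E 0 n \<inter> E 1 n = E 1 n \<inter> E 0 n" by blast
    ultimately show ?thesis using boundary_Dt[of \<nu> n] by (simp add: E_def)
  qed
  have "summable (\<lambda>n. \<bar>\<nu> (E 1 n - E 0 n)\<bar> + \<bar>\<nu> (E 0 n - E 1 n)\<bar>)" using s1 s2 by (rule summable_add)
  moreover have "norm \<bar>MT_boundary (top_of_set W) 1 \<nu> (Dt n)\<bar> \<le> \<bar>\<nu> (E 1 n - E 0 n)\<bar> + \<bar>\<nu> (E 0 n - E 1 n)\<bar>" for n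
    unfolding eq by simp
  ultimately show ?thesis
    by (rule summable_comparison_test'[where N = 0])
qed

end


definition wt :: "real \<Rightarrow> nat \<Rightarrow> real" where
  "wt s k = (real k + 1) powr (-s) - (real k + 2) powr (-s)"

lemma wt_nonneg: "0 < s \<Longrightarrow> 0 \<le> wt s k"
  unfolding wt_def by (auto intro!: powr_mono2')

lemma wt_tail_sums:
  assumes "0 < s"
  shows "(\<lambda>k. wt s k * indicator {k. n \<le> k} k) sums ((real n + 1) powr (-s))"
proof -
  define F where "F i = (real (i + n) + 1) powr (-s)" for i
  have "F \<longlonglongrightarrow> 0"
  proof -
    have "filterlim (\<lambda>i. real (i + n) + 1) at_top sequentially"
      by real_asymp
    then show ?thesis unfolding F_def using assms by (intro tendsto_neg_powr) auto
  qed
  then have "(\<lambda>i. F i - F (Suc i)) sums (F 0 - 0)" by (rule telescope_sums')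
  moreover have "F i - F (Suc i) = wt s (i + n) * indicator {k. n \<le> k} (i + n)" for i
    by (simp add: F_def wt_def indicator_def add_ac)
  moreover have "(\<Sum>i<n. wt s i * indicator {k. n \<le> k} i) = 0" by (simp add: indicator_def)
  ultimately show ?thesis using sums_iff_shift[of "\<lambda>k. wt s k * indicator {k. n \<le> k} k" n]
    by (simp add: F_def)
qed

definition Mw :: "real \<Rightarrow> nat measure" where
  "Mw s = density (count_space UNIV) (\<lambda>k. ennreal (wt s k))"

lemma Mw_sets [simp]: "sets (Mw s) = UNIV" and Mw_space [simp]: "space (Mw s) = UNIV"
  by (simp_all add: Mw_def)

lemma Mw_emeasure: "emeasure (Mw s) A = suminf (\<lambda>k. ennreal (wt s k) * indicator A k)"
  unfolding Mw_def by (simp add: emeasure_density nn_integral_count_space_nat)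

lemma Mw_tail_e:
  assumes "0 < s"
  shows "emeasure (Mw s) {k. n \<le> k} = ennreal ((real n + 1) powr (-s))"
proof -
  have "suminf (\<lambda>k. ennreal (wt s k) * indicator {k. n \<le> k} k) = suminf (\<lambda>k. ennreal (wt s k * indicator {k. n \<le> k} k))"
    by (intro arg_cong[where f=suminf] ext) (simp add: indicator_def)
  also have "\<dots> = ennreal (suminf (\<lambda>k. wt s k * indicator {k. n \<le> k} k))"
    using wt_tail_sums[OF assms, of n] wt_nonneg[OF assms]
    by (intro suminf_ennreal2) (auto simp: sums_summable indicator_def)
  also have "suminf (\<lambda>k. wt s k * indicator {k. n \<le> k} k) = (real n + 1) powr (-s)"
    using wt_tail_sums[OF assms, of n] by (simp add: sums_iff)
  finally show ?thesis by (simp add: Mw_emeasure)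
qed

lemma Mw_finite: "0 < s \<Longrightarrow> finite_measure (Mw s)"
  using Mw_tail_e[of s 0] by (intro finite_measureI) simp

lemma Mw_tail: "0 < s \<Longrightarrow> measure (Mw s) {k. n \<le> k} = (real n + 1) powr (-s)"
  using Mw_tail_e[of s n] by (simp add: measure_def)



context warsaw begin

definition tp :: "real \<times> real \<Rightarrow> (nat \<Rightarrow> real) \<Rightarrow> real \<times> real" where
  "tp p = restrict (\<lambda>_. p) (standard_simplex 0)"

lemma tp_top: "p \<in> W \<Longrightarrow> tp p \<in> topspace X0"
proof -
  assume p: "p \<in> W"
  have "continuous_map (Sim 0) (top_of_set W) (\<lambda>_. p)" using p by simp
  then have "continuous_map (Sim 0) (top_of_set W) (tp p)"
    by (rule continuous_map_eq) (simp add: tp_def)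
  then show ?thesis by (simp add: singular_simplex_def tp_def)
qed

lemma tp_e0 [simp]: "tp p e0 = p" by (simp add: tp_def)

definition tt :: "nat \<Rightarrow> (nat \<Rightarrow> real) \<Rightarrow> real \<times> real" where
  "tt k = tp (mm (Suc k), 1)"

definition tinf where "tinf = tp (0, 1)"

lemma tt_top: "tt k \<in> topspace X0" unfolding tt_def using mm_W by (rule tp_top)

lemma tt_lim: "limitin X0 tt tinf sequentially"
  unfolding limitin_def
proof (intro conjI allI impI)
  show "tinf \<in> topspace X0" unfolding tinf_def using top_W by (rule tp_top)
  fix U assume U: "openin X0 U \<and> tinf \<in> U"
  have U1: "openin (compact_open_topology (Sim 0) (top_of_set W)) U" using U by (simp add: simplex_space_def)
  have U2: "tinf \<in> U" using U by simp
  obtain T where T: "finite T"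
    "\<forall>S\<in>T. \<exists>K U. compactin (Sim 0) K \<and> openin (top_of_set W) U \<and> S = {f \<in> cmaps (Sim 0) (top_of_set W). f ` K \<subseteq> U}"
    "tinf \<in> cmaps (Sim 0) (top_of_set W) \<inter> \<Inter>T" "cmaps (Sim 0) (top_of_set W) \<inter> \<Inter>T \<subseteq> U"
    using co_openin_cases[OF U1 U2] by (elim exE conjE) blast
  have pl: "(\<lambda>k. (mm (Suc k), 1::real)) \<longlonglongrightarrow> (0, 1)"
  proof (rule tendsto_Pair)
    show "(\<lambda>k. mm (Suc k)) \<longlonglongrightarrow> 0" by (rule LIMSEQ_Suc[OF mm_tendsto])
  qed (rule tendsto_const)
  have "eventually (\<lambda>k. tt k \<in> S) sequentially" if S: "S \<in> T" for S
  proof -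
    obtain Kc Uo where KU: "compactin (Sim 0) Kc" "openin (top_of_set W) Uo"
      "S = {f \<in> cmaps (Sim 0) (top_of_set W). f ` Kc \<subseteq> Uo}" using T(2)[rule_format, OF S] by (elim exE conjE) (rule that)
    have Kc0: "Kc \<subseteq> standard_simplex 0" using KU(1) by (simp add: compactin_def)
    have tinfS: "tinf \<in> S" using T(3) S by (simp add: Inter_iff)
    show ?thesis
    proof (cases "Kc = {}")
      case True
      have "tt k \<in> S" for k
      proof -
        have "tt k \<in> cmaps (Sim 0) (top_of_set W)" using tt_top[of k] by (simp add: cmaps_Sim)
        then show ?thesis using KU(3) True by simp
      qed
      then show ?thesis by (simp add: always_eventually)
    next
      case False
      then have Kce: "Kc = {e0}" using Kc0 by (auto simp: standard_simplex_0 e0_def)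
      have "(0, 1) \<in> Uo" using tinfS KU(3) Kce by (simp add: tinf_def)
      obtain Op where Op: "open Op" "Uo = W \<inter> Op" using KU(2) openin_open by blast
      have "eventually (\<lambda>k. (mm (Suc k), 1::real) \<in> Op) sequentially"
        using topological_tendstoD[OF pl Op(1)] \<open>(0, 1) \<in> Uo\<close> Op(2) by blast
      then show ?thesis
      proof (rule eventually_mono)
        fix k assume "(mm (Suc k), 1::real) \<in> Op"
        then have "(mm (Suc k), 1::real) \<in> Uo" using Op(2) mm_W by blast
        moreover have "tt k \<in> cmaps (Sim 0) (top_of_set W)" using tt_top[of k] by (simp add: cmaps_Sim)
        moreover have "tt k ` Kc = {(mm (Suc k), 1)}" using Kce by (simp add: tt_def)
        ultimately show "tt k \<in> S" using KU(3) by simp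
      qed
    qed
  qed
  then have "eventually (\<lambda>k. \<forall>S\<in>T. tt k \<in> S) sequentially"
    by (intro eventually_ball_finite[OF T(1)] ballI)
  then show "eventually (\<lambda>k. tt k \<in> U) sequentially"
  proof (rule eventually_mono)
    fix k assume "\<forall>S\<in>T. tt k \<in> S"
    then have "tt k \<in> cmaps (Sim 0) (top_of_set W) \<inter> \<Inter>T" using tt_top by (simp add: cmaps_Sim)
    then show "tt k \<in> U" using T(4) by blast
  qed
qed

definition mu :: "real \<Rightarrow> (((nat \<Rightarrow> real) \<Rightarrow> real \<times> real) set \<Rightarrow> real)" where
  "mu s A = (if A \<in> borel_sets_of X0 then measure (Mw s) {k. tt k \<in> A} else 0)"

lemma mu_chain:
  assumes s: "0 < s"
  shows "mu s \<in> MT_chains (top_of_set W) 0"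
proof -
  interpret fm: finite_measure "Mw s" by (rule Mw_finite[OF s])
  have fsm: "finite_signed_borel_measure X0 (mu s)"
    unfolding finite_signed_borel_measure_def
  proof (intro conjI allI impI)
    fix A assume "A \<notin> borel_sets_of X0" then show "mu s A = 0" by (simp add: mu_def)
  next
    fix A :: "nat \<Rightarrow> _" assume A: "range A \<subseteq> borel_sets_of X0" "disjoint_family A"
    have U: "(\<Union>n. A n) \<in> borel_sets_of X0" using A(1) by (rule borel_UN)
    have "(\<lambda>n. measure (Mw s) {k. tt k \<in> A n}) sums measure (Mw s) (\<Union>n. {k. tt k \<in> A n})"
      by (rule fm.finite_measure_UNION) (use A(2) in \<open>auto simp: disjoint_family_on_def\<close>)
    moreover have "(\<Union>n. {k. tt k \<in> A n}) = {k. tt k \<in> (\<Union>n. A n)}" by auto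
    ultimately have "(\<lambda>n. measure (Mw s) {k. tt k \<in> A n}) sums measure (Mw s) {k. tt k \<in> (\<Union>n. A n)}"
      by simp
    moreover have "(\<lambda>n. mu s (A n)) = (\<lambda>n. measure (Mw s) {k. tt k \<in> A n})"
      by (intro ext) (use A(1) in \<open>auto simp: mu_def\<close>)
    moreover have "mu s (\<Union>n. A n) = measure (Mw s) {k. tt k \<in> (\<Union>n. A n)}"
      using U by (simp add: mu_def)
    ultimately show "(\<lambda>n. mu s (A n)) sums mu s (\<Union>n. A n)" by simp
  qed
  have cc: "has_compact_carrier X0 (mu s)"
    unfolding has_compact_carrier_def
  proof (intro exI conjI ballI impI)
    show "compactin X0 (insert tinf (range tt))"
      by (rule compactin_sequence_with_limit[OF tt_lim]) (use tt_top in auto)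
    fix A assume "A \<in> borel_sets_of X0" "A \<inter> insert tinf (range tt) = {}"
    then have "{k. tt k \<in> A} = {}" by auto
    then show "mu s A = 0" by (simp add: mu_def)
  qed
  show ?thesis using fsm cc by (simp add: MT_chains_def)
qed

lemma mu_Dt:
  assumes s: "0 < s"
  shows "mu s (Dt n) = (real n + 1) powr (-s)"
proof -
  have "{k. tt k \<in> Dt n} = {k. n \<le> k}"
    using tt_top by (auto simp: Dt_def tt_def mm_Dset_iff)
  then show ?thesis using Dt_borel Mw_tail[OF s] by (simp add: mu_def)
qed

end


lemma powr_indep:
  fixes S :: "real set" and d :: "real \<Rightarrow> real"
  assumes S: "finite S" "S \<subseteq> {0<..<1}"
    and sm: "summable (\<lambda>n. \<bar>\<Sum>s\<in>S. d s * (real n + 1) powr (-s)\<bar>)"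
  shows "\<forall>s\<in>S. d s = 0"
proof (rule ccontr)
  assume "\<not> (\<forall>s\<in>S. d s = 0)"
  define S' where "S' = {s\<in>S. d s \<noteq> 0}"
  have S'ne: "S' \<noteq> {}" and fS': "finite S'" using \<open>\<not> _\<close> S(1) by (auto simp: S'_def)
  define s0 where "s0 = Min S'"
  have s0S': "s0 \<in> S'" using S'ne fS' by (simp add: s0_def)
  have s0le: "s0 \<le> s" if "s \<in> S'" for s using fS' that by (simp add: s0_def)
  have s01: "0 < s0" "s0 < 1" using s0S' S(2) by (auto simp: S'_def)
  have d0: "d s0 \<noteq> 0" using s0S' by (simp add: S'_def)
  define q where "q n = (\<Sum>s\<in>S' - {s0}. d s * (real n + 1) powr (s0 - s))" for n :: nat
  have "q \<longlonglongrightarrow> (\<Sum>s\<in>S' - {s0}. d s * 0)"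
    unfolding q_def
  proof (intro tendsto_sum tendsto_mult tendsto_const)
    fix s assume s: "s \<in> S' - {s0}"
    then have "s0 - s < 0" using s0le[of s] by auto
    moreover have "filterlim (\<lambda>n. real n + 1) at_top sequentially" by real_asymp
    ultimately show "(\<lambda>n. (real n + 1) powr (s0 - s)) \<longlonglongrightarrow> 0" by (rule tendsto_neg_powr)
  qed
  then have q0: "q \<longlonglongrightarrow> 0" by simp
  have "eventually (\<lambda>n. norm (q n) < \<bar>d s0\<bar> / 2) sequentially"
    using q0 d0 by (intro order_tendstoD(2)[OF tendsto_norm_zero[OF q0]]) simp
  then have ev: "eventually (\<lambda>n. norm (\<bar>d s0\<bar> / 2 * (real n + 1) powr (-s0)) \<le> \<bar>\<Sum>s\<in>S. d s * (real n + 1) powr (-s)\<bar>) sequentially"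
  proof (rule eventually_mono)
    fix n assume qn: "norm (q n) < \<bar>d s0\<bar> / 2"
    define x where "x = real n + 1"
    have x: "x > 0" by (simp add: x_def)
    have "(\<Sum>s\<in>S. d s * x powr (-s)) = (\<Sum>s\<in>S'. d s * x powr (-s))"
      by (rule sum.mono_neutral_right) (use S(1) in \<open>auto simp: S'_def\<close>)
    also have "\<dots> = d s0 * x powr (-s0) + (\<Sum>s\<in>S' - {s0}. d s * x powr (-s))"
      using fS' s0S' by (simp add: sum.remove)
    also have "(\<Sum>s\<in>S' - {s0}. d s * x powr (-s)) = x powr (-s0) * q n"
      unfolding q_def sum_distrib_left x_def[symmetric]
    proof (rule sum.cong)
      fix s show "d s * x powr - s = x powr - s0 * (d s * x powr (s0 - s))"
        using x by (simp add: powr_add[symmetric])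
    qed simp
    finally have eq: "(\<Sum>s\<in>S. d s * x powr (-s)) = x powr (-s0) * (d s0 + q n)"
      by (simp add: algebra_simps)
    have "\<bar>d s0\<bar> / 2 \<le> \<bar>d s0 + q n\<bar>" 
    proof -
      have "\<bar>d s0\<bar> \<le> \<bar>d s0 + q n\<bar> + \<bar>- q n\<bar>" using abs_triangle_ineq[of "d s0 + q n" "- q n"] by simp
      then show ?thesis using qn by simp
    qed
    then have "x powr (-s0) * (\<bar>d s0\<bar> / 2) \<le> x powr (-s0) * \<bar>d s0 + q n\<bar>"
      by (rule mult_left_mono) simp
    then show "norm (\<bar>d s0\<bar> / 2 * (real n + 1) powr (-s0)) \<le> \<bar>\<Sum>s\<in>S. d s * (real n + 1) powr (-s)\<bar>"
      unfolding x_def[symmetric] eq using x by (simp add: abs_mult mult.commute)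
  qed
  have "summable (\<lambda>n. \<bar>d s0\<bar> / 2 * (real n + 1) powr (-s0))"
    by (rule summable_comparison_test_ev[OF ev sm])
  then have "summable (\<lambda>n. (real n + 1) powr (-s0))"
    using d0 by (subst (asm) summable_cmult_iff) simp
  then have "summable (\<lambda>n. real (Suc n) powr (-s0))" by (simp add: add.commute)
  then have "summable (\<lambda>n. real n powr (-s0))" by (subst (asm) summable_Suc_iff)
  then have "-s0 < -1" by (simp add: summable_real_powr_iff)
  then show False using s01 by simp
qed



context warsaw begin

lemma mu_inj: "inj_on mu {0<..<1}"
proof (rule inj_onI)
  fix s s' assume s: "s \<in> {0<..<1}" "s' \<in> {0<..<1}" "mu s = mu s'"
  then have "mu s (Dt 1) = mu s' (Dt 1)" by simp
  then have "2 powr (-s) = (2::real) powr (-s')" using mu_Dt[of s 1] mu_Dt[of s' 1] s by simp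
  then show "s = s'" by (simp add: powr_inj)
qed

lemma main: "MT_H0_uncountable_dim (top_of_set W)"
  unfolding MT_H0_uncountable_dim_def
proof (intro exI[of _ "mu ` {0<..<1}"] conjI allI impI)
  show "mu ` {0<..<1} \<subseteq> MT_chains (top_of_set W) 0" using mu_chain by auto
  show "uncountable (mu ` {0<..<1})"
  proof
    assume "countable (mu ` {0<..<1})"
    then have "countable {0<..<(1::real)}" using mu_inj by (rule countable_image_inj_on)
    then show False using uncountable_open_interval[of 0 "1::real"] by simp
  qed
  fix F c
  assume F: "finite F" "F \<subseteq> mu ` {0<..<1}"
    and bd: "\<exists>\<nu>\<in>MT_chains (top_of_set W) 1. MT_boundary (top_of_set W) 1 \<nu> = (\<lambda>A. \<Sum>\<mu>\<in>F. c \<mu> * \<mu> A)"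
  then obtain \<nu> where \<nu>: "\<nu> \<in> MT_chains (top_of_set W) 1"
    and eqb: "MT_boundary (top_of_set W) 1 \<nu> = (\<lambda>A. \<Sum>\<mu>\<in>F. c \<mu> * \<mu> A)" by blast
  define S where "S = {s \<in> {0<..<1}. mu s \<in> F}"
  have FS: "F = mu ` S" using F(2) by (auto simp: S_def)
  have injS: "inj_on mu S" using mu_inj by (rule inj_on_subset) (auto simp: S_def)
  have fS: "finite S" using F(1) FS injS finite_imageD by blast
  have SS: "S \<subseteq> {0<..<1}" by (auto simp: S_def)
  have val: "MT_boundary (top_of_set W) 1 \<nu> (Dt n) = (\<Sum>s\<in>S. c (mu s) * (real n + 1) powr (-s))" for n
  proof -
    have "MT_boundary (top_of_set W) 1 \<nu> (Dt n) = (\<Sum>\<mu>\<in>F. c \<mu> * \<mu> (Dt n))" unfolding eqb by (rule refl)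
    also have "\<dots> = (\<Sum>s\<in>S. c (mu s) * mu s (Dt n))" unfolding FS by (simp add: sum.reindex[OF injS])
    also have "\<dots> = (\<Sum>s\<in>S. c (mu s) * (real n + 1) powr (-s))"
      by (rule sum.cong) (use SS mu_Dt in auto)
    finally show ?thesis .
  qed
  have "summable (\<lambda>n. \<bar>\<Sum>s\<in>S. c (mu s) * (real n + 1) powr (-s)\<bar>)"
    using boundary_summable[OF \<nu>] unfolding val .
  then have "\<forall>s\<in>S. c (mu s) = 0" by (rule powr_indep[OF fS SS])
  then show "\<forall>\<mu>\<in>F. c \<mu> = 0" using FS by auto
qed

end

theorem theorem4:
  fixes g :: "real \<Rightarrow> real \<times> real" and W :: "(real \<times> real) set"
  assumes "arc g"
    and "pathstart g = (0, -1)"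
    and "pathfinish g = (2 / (3 * pi), -1)"
    and "path_image g \<inter> (warsaw_sine \<union> warsaw_segment) = {(0, -1), (2 / (3 * pi), -1)}"
    and "W = warsaw_sine \<union> warsaw_segment \<union> path_image g"
  shows "MT_H0_uncountable_dim (top_of_set W)"
proof -
  interpret warsaw g W by (rule warsaw.intro) (use assms in auto)
  show ?thesis by (rule main)
qed


end
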